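(* Let $n\ge 1$ and let $\mathcal{C}$ be a clique partition of the complete graph $K_n$ all of whose cliques have at most $n-1$ vertices. Then $\sum_{C\in\mathcal{C}}|C|\ge 3n-3$.
   Context: A clique in a graph $G$ is a set of pairwise adjacent vertices. A clique partition of $G$ is a family $\mathcal{C}$ of cliques of $G$ such that every edge of $G$ has both endpoints in exactly one member of $\mathcal{C}$. *)

theory Defs
  imports Main
begin

text \<open>Simple graphs given by a vertex set V and a symmetric irreflexive
 adjacency relation E.\<close>

definition is_clique :: "'a set \<Rightarrow> ('a \<Rightarrow> 'a \<Rightarrow> bool) \<Rightarrow> 'a set \<Rightarrow> bool" where
  "is_clique V E C \<longleftrightarrow> C \<subseteq> V \<and> (\<forall>u\<in>C. \<forall>v\<in>C. u \<noteq> v \<longrightarrow> E u v)"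

definition is_clique_partition ::
  "'a set \<Rightarrow> ('a \<Rightarrow> 'a \<Rightarrow> bool) \<Rightarrow> 'a set set \<Rightarrow> bool" where
  "is_clique_partition V E \<C> \<longleftrightarrow>
     (\<forall>C\<in>\<C>. is_clique V E C) \<and>
     (\<forall>u\<in>V. \<forall>v\<in>V. u \<noteq> v \<longrightarrow> E u v \<longrightarrow> (\<exists>!C. C \<in> \<C> \<and> u \<in> C \<and> v \<in> C))"

definition Kn_vertices :: "nat \<Rightarrow> nat set" where
  "Kn_vertices n = {0..<n}"

definition Kn_adj :: "nat \<Rightarrow> nat \<Rightarrow> bool" where
  "Kn_adj u v \<longleftrightarrow> u \<noteq> v"

end

theory Submission
  imports Defs
begin

lemma card_as_sum:
  assumes "finite V" "C \<subseteq> V"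
  shows "card C = (\<Sum>v\<in>V. if v \<in> C then 1 else 0 :: nat)"
proof -
  have "(\<Sum>v\<in>V. if v \<in> C then 1 else 0 :: nat) = (\<Sum>v\<in>V \<inter> C. 1)"
    using assms(1) by (simp add: sum.If_cases)
  also have "V \<inter> C = C" using assms(2) by blast
  finally show ?thesis by simp
qed

lemma double_count:
  assumes "finite V" "finite \<C>" "\<forall>C\<in>\<C>. C \<subseteq> V"
  shows "(\<Sum>C\<in>\<C>. card C) = (\<Sum>v\<in>V. card {C\<in>\<C>. v \<in> C})"
proof -
  have "(\<Sum>C\<in>\<C>. card C) = (\<Sum>C\<in>\<C>. \<Sum>v\<in>V. if v \<in> C then 1 else 0 :: nat)"
    using assms by (intro sum.cong refl card_as_sum) auto
  also have "\<dots> = (\<Sum>v\<in>V. \<Sum>C\<in>\<C>. if v \<in> C then 1 else 0 :: nat)"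
    by (rule sum.swap)
  also have "\<dots> = (\<Sum>v\<in>V. card {C\<in>\<C>. v \<in> C})"
    using assms(2) by (intro sum.cong refl) (simp add: sum.inter_filter[symmetric])
  finally show ?thesis .
qed

lemma inj_bound:
  assumes P: "is_clique_partition V E \<C>" and fin: "finite \<C>"
    and v: "v \<in> V" and U: "U \<subseteq> V - {v}" and adj: "\<forall>u\<in>U. E v u"
    and cond: "\<forall>C\<in>\<C>. \<forall>a\<in>U. \<forall>b\<in>U. v \<in> C \<and> a \<in> C \<and> b \<in> C \<longrightarrow> a = b"
  shows "card U \<le> card {C\<in>\<C>. v \<in> C}"
proof -
  define f where "f u = (THE C. C \<in> \<C> \<and> v \<in> C \<and> u \<in> C)" for u
  have P2: "\<forall>u\<in>V. \<forall>w\<in>V. u \<noteq> w \<longrightarrow> E u w \<longrightarrow> (\<exists>!C. C \<in> \<C> \<and> u \<in> C \<and> w \<in> C)"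
    using P unfolding is_clique_partition_def by (rule conjunct2)
  have ex: "\<exists>!C. C \<in> \<C> \<and> v \<in> C \<and> u \<in> C" if "u \<in> U" for u
  proof -
    have "u \<in> V" "u \<noteq> v" "E v u" using that U adj by auto
    then show ?thesis using P2 v by simp
  qed
  have fp: "f u \<in> \<C> \<and> v \<in> f u \<and> u \<in> f u" if "u \<in> U" for u
    unfolding f_def by (rule theI'[OF ex[OF that]])
  have "inj_on f U"
  proof (rule inj_onI)
    fix a b assume ab: "a \<in> U" "b \<in> U" "f a = f b"
    have "f a \<in> \<C>" "v \<in> f a" "a \<in> f a" using fp[OF ab(1)] by auto
    moreover have "b \<in> f a" using fp[OF ab(2)] ab(3) by simp
    ultimately show "a = b" using cond ab(1,2) by blast
  qed
  moreover have "f ` U \<subseteq> {C\<in>\<C>. v \<in> C}" using fp by blast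
  moreover have "finite {C\<in>\<C>. v \<in> C}" using fin by simp
  ultimately show ?thesis by (rule card_inj_on_le)
qed

theorem mainTheorem2:
  fixes n :: nat and \<C> :: "nat set set"
  assumes "n \<ge> 1"
    and "is_clique_partition (Kn_vertices n) Kn_adj \<C>"
    and "\<forall>C\<in>\<C>. card C \<le> n - 1"
  shows "(\<Sum>C\<in>\<C>. card C) \<ge> 3 * n - 3"
proof (cases "n = 1")
  case True then show ?thesis by simp
next
  case False
  hence n2: "n \<ge> 2" using assms(1) by simp
  define V where "V = {0..<n}"
  have P: "is_clique_partition V Kn_adj \<C>" using assms(2) by (simp add: V_def Kn_vertices_def)
  have sub: "\<forall>C\<in>\<C>. C \<subseteq> V" using P unfolding is_clique_partition_def is_clique_def by blast
  have finV: "finite V" "card V = n" by (simp_all add: V_def)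
  have fin: "finite \<C>"
    by (rule finite_subset[of _ "Pow V"]) (use sub finV in auto)
  have cov: "\<exists>C\<in>\<C>. u \<in> C \<and> w \<in> C" if "u \<in> V" "w \<in> V" "u \<noteq> w" for u w
    using P that unfolding is_clique_partition_def Kn_adj_def by blast
  have uniq: "C = D" if "C \<in> \<C>" "D \<in> \<C>" "u \<in> C" "w \<in> C" "u \<in> D" "w \<in> D" "u \<noteq> w" for C D u w
  proof -
    have "u \<in> V" "w \<in> V" using sub that by auto
    then show ?thesis using P that unfolding is_clique_partition_def Kn_adj_def by blast
  qed
  have ge2: "card C \<ge> 2" if "C \<in> \<C>" "u \<in> C" "w \<in> C" "u \<noteq> w" for C u w
  proof -
    have "finite C" using sub that finV finite_subset by blast
    then have "card {u, w} \<le> card C" using that by (intro card_mono) auto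
    then show ?thesis using that by simp
  qed
  have n3: "n \<ge> 3"
  proof (rule ccontr)
    assume "\<not> n \<ge> 3"
    hence "n = 2" using n2 by simp
    then obtain C where "C \<in> \<C>" "0 \<in> C" "1 \<in> C" using cov[of 0 1] by (auto simp: V_def)
    then show False using ge2[of C 0 1] assms(3) \<open>n = 2\<close> by auto
  qed
  define r where "r v = card {C\<in>\<C>. v \<in> C}" for v
  have S: "(\<Sum>C\<in>\<C>. card C) = (\<Sum>v\<in>V. r v)"
    unfolding r_def using double_count[OF finV(1) fin sub] .
  have ne: "\<C> \<noteq> {}" using cov[of 0 1] n2 by (auto simp: V_def)
  define k where "k = Max (card ` \<C>)"
  have "k \<in> card ` \<C>" unfolding k_def using fin ne by (intro Max_in) auto
  then obtain L where L: "L \<in> \<C>" "card L = k" by (metis imageE)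
  have kmax: "card C \<le> k" if "C \<in> \<C>" for C
    unfolding k_def using fin that by simp
  have k2: "k \<ge> 2"
  proof -
    obtain C where "C \<in> \<C>" "0 \<in> C" "1 \<in> C" using cov[of 0 1] n2 by (auto simp: V_def)
    then show ?thesis using ge2[of C 0 1] kmax[of C] by simp
  qed
  have kn: "k \<le> n - 1" using L assms(3) by auto
  have finL: "finite L" using sub L finV finite_subset by blast
  have LV: "L \<subseteq> V" using sub L by blast
  show ?thesis
  proof (cases "k = 2")
    case True
    have "r v \<ge> n - 1" if v: "v \<in> V" for v
    proof -
      have "card (V - {v}) \<le> r v"
        unfolding r_def
      proof (rule inj_bound[OF P fin v])
        show "\<forall>u\<in>V - {v}. Kn_adj v u" by (auto simp: Kn_adj_def)
        show "\<forall>C\<in>\<C>. \<forall>a\<in>V - {v}. \<forall>b\<in>V - {v}. v \<in> C \<and> a \<in> C \<and> b \<in> C \<longrightarrow> a = b"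
        proof (intro ballI impI, rule ccontr)
          fix C a b assume h: "C \<in> \<C>" "a \<in> V - {v}" "b \<in> V - {v}" "v \<in> C \<and> a \<in> C \<and> b \<in> C" "a \<noteq> b"
          have "finite C" using sub h finV finite_subset by blast
          then have "card {v, a, b} \<le> card C" using h by (intro card_mono) auto
          then show False using h kmax[of C] True by auto
        qed
      qed simp
      then show ?thesis using v finV by simp
    qed
    hence "(\<Sum>v\<in>V. r v) \<ge> (\<Sum>v\<in>V. n - 1)" by (intro sum_mono) auto
    hence B: "n * (n - 1) \<le> (\<Sum>v\<in>V. r v)" using finV by simp
    have "3 * n - 3 = 3 * (n - 1)" by (simp add: diff_mult_distrib2)
    also have "\<dots> \<le> n * (n - 1)" using n3 by (intro mult_right_mono) auto
    also note B
    finally show ?thesis unfolding S .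
  next
    case False
    hence k3: "k \<ge> 3" using k2 by simp
    have out: "r v \<ge> k" if v: "v \<in> V - L" for v
    proof -
      have "card L \<le> r v"
        unfolding r_def
      proof (rule inj_bound[OF P fin])
        show "v \<in> V" using v by simp
        show "L \<subseteq> V - {v}" using LV v by blast
        show "\<forall>u\<in>L. Kn_adj v u" using v by (auto simp: Kn_adj_def)
        show "\<forall>C\<in>\<C>. \<forall>a\<in>L. \<forall>b\<in>L. v \<in> C \<and> a \<in> C \<and> b \<in> C \<longrightarrow> a = b"
        proof (intro ballI impI, rule ccontr)
          fix C a b assume h: "C \<in> \<C>" "a \<in> L" "b \<in> L" "v \<in> C \<and> a \<in> C \<and> b \<in> C" "a \<noteq> b"
          have "C = L" using uniq[of C L a b] h L(1) by simp
          then show False using h v by simp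
        qed
      qed
      then show ?thesis using L by simp
    qed
    have inn: "r v \<ge> 2" if v: "v \<in> L" for v
    proof -
      have "card L < card V" using L kn finV n2 by simp
      hence "\<not> V \<subseteq> L" using card_mono[OF finL, of V] by linarith
      then obtain w where w: "w \<in> V" "w \<notin> L" by blast
      have "\<exists>u. u \<in> L \<and> u \<noteq> v"
      proof (rule ccontr)
        assume "\<not> ?thesis" hence "L \<subseteq> {v}" by blast
        hence "card L \<le> 1" using card_mono[of "{v}" L] by simp
        then show False using L k2 by simp
      qed
      then obtain u where u: "u \<in> L" "u \<noteq> v" by blast
      have "card {u, w} \<le> r v"
        unfolding r_def
      proof (rule inj_bound[OF P fin])
        show "v \<in> V" using v LV by blast
        show "{u, w} \<subseteq> V - {v}" using LV u w v by blast
        show "\<forall>x\<in>{u, w}. Kn_adj v x" using u w v by (auto simp: Kn_adj_def)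
        show "\<forall>C\<in>\<C>. \<forall>a\<in>{u, w}. \<forall>b\<in>{u, w}. v \<in> C \<and> a \<in> C \<and> b \<in> C \<longrightarrow> a = b"
        proof (intro ballI impI, rule ccontr)
          fix C a b assume h: "C \<in> \<C>" "a \<in> {u, w}" "b \<in> {u, w}" "v \<in> C \<and> a \<in> C \<and> b \<in> C" "a \<noteq> b"
          have uw: "u \<in> C" "w \<in> C" using h by auto
          have "C = L" using uniq[of C L v u] h(1,4) uw(1) L(1) u v by simp
          then show False using uw(2) w by simp
        qed
      qed
      moreover have "u \<noteq> w" using u w by blast
      ultimately show ?thesis by simp
    qed
    have "(\<Sum>v\<in>V. r v) = (\<Sum>v\<in>L. r v) + (\<Sum>v\<in>V - L. r v)"
      using sum.subset_diff[OF LV finV(1), of r] by (simp add: add.commute)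
    moreover have "(\<Sum>v\<in>L. r v) \<ge> (\<Sum>v\<in>L. 2)" using inn by (intro sum_mono) auto
    moreover have "(\<Sum>v\<in>V - L. r v) \<ge> (\<Sum>v\<in>V - L. k)" using out by (intro sum_mono) auto
    moreover have "card (V - L) = n - k" using finV LV L finL by (simp add: card_Diff_subset)
    ultimately have "(\<Sum>v\<in>V. r v) \<ge> 2 * k + (n - k) * k" using L by simp
    moreover have "2 * k + (n - k) * k \<ge> 3 * n - 3"
    proof -
      obtain a where a: "k = 3 + a" using k3 by (metis le_iff_add)
      have "\<exists>b. n = 4 + a + b" using kn a n3 by (intro exI[of _ "n - 4 - a"]) arith
      then obtain b where b: "n = 4 + a + b" by blast
      show ?thesis unfolding a b by (simp add: algebra_simps)
    qed
    ultimately show ?thesis using S by linarith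
  qed
qed

end
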